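(* For every $q^s\in\mathbb{R}^{d_s}$ and every $i=1,\dots,d_s$, $F_3(q^s)^TG_{2,i}(q^s)=G_{2,i}(q^s)^TF_3(q^s)$, i.e. $F_3^TG_{2,i}$ is symmetric.
   Context: Let $d_f,d_s\ge1$, $\epsilon>0$, and let $K:\mathbb{R}^{d_s}\to\mathbb{R}^{d_f\times d_f}$ be continuously differentiable with symmetric positive definite values. Let $H>0$, let $n\ge1$ be an integer and $h=H/2^n$. For $q^s\in\mathbb{R}^{d_s}$ write $a=\epsilon^{-1}K(q^s)$ and $b_i=\epsilon^{-1}\partial K(q^s)/\partial q^s_i$, and define the $2d_f\times 2d_f$ block matrices $$A(q^s)=\begin{bmatrix} I-\tfrac{h^2}{2}a & h\,a\\ -h\big(I-\tfrac{h^2}{4}a\big) & I-\tfrac{h^2}{2}a\end{bmatrix},\quad C(q^s)=\begin{bmatrix} I-\tfrac{h^2}{2}a & h\big(I-\tfrac{h^2}{4}a\big)\\ -h\,a & I-\tfrac{h^2}{2}a\end{bmatrix},$$ $$B_i(q^s)=\begin{bmatrix} h\,b_i & \tfrac{h^2}{2}b_i\\ -\tfrac{h^2}{2}b_i & -\tfrac{h^3}{4}b_i\end{bmatrix}.$$ Define $F_2,G_{2,i},F_3$ by $\begin{bmatrix}F_2 & G_{2,i}\\0&F_3\end{bmatrix}=\begin{bmatrix}A&B_i\\0&C\end{bmatrix}^{2^n}$. *)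

theory Defs
  imports "HOL-Analysis.Analysis"
begin

definition block_mat ::
  "real^'n^'n \<Rightarrow> real^'n^'n \<Rightarrow> real^'n^'n \<Rightarrow> real^'n^'n \<Rightarrow> real^('n+'n)^('n+'n)" where
  "block_mat P Q R S = (\<chi> i j. case i of
       Inl i' \<Rightarrow> (case j of Inl j' \<Rightarrow> P$i'$j' | Inr j' \<Rightarrow> Q$i'$j')
     | Inr i' \<Rightarrow> (case j of Inl j' \<Rightarrow> R$i'$j' | Inr j' \<Rightarrow> S$i'$j'))"

definition blk11 :: "real^('n+'n)^('n+'n) \<Rightarrow> real^'n^'n" where
  "blk11 M = (\<chi> i j. M $ Inl i $ Inl j)"
definition blk12 :: "real^('n+'n)^('n+'n) \<Rightarrow> real^'n^'n" where
  "blk12 M = (\<chi> i j. M $ Inl i $ Inr j)"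
definition blk21 :: "real^('n+'n)^('n+'n) \<Rightarrow> real^'n^'n" where
  "blk21 M = (\<chi> i j. M $ Inr i $ Inl j)"
definition blk22 :: "real^('n+'n)^('n+'n) \<Rightarrow> real^'n^'n" where
  "blk22 M = (\<chi> i j. M $ Inr i $ Inr j)"

text \<open>Matrix power with respect to matrix multiplication (not the pointwise product).\<close>
fun mat_pow :: "real^'n^'n \<Rightarrow> nat \<Rightarrow> real^'n^'n" where
  "mat_pow M 0 = mat 1"
| "mat_pow M (Suc k) = M ** mat_pow M k"

definition Amat :: "real \<Rightarrow> real^'f^'f \<Rightarrow> real^('f+'f)^('f+'f)" where
  "Amat h a = block_mat (mat 1 - (h^2/2) *\<^sub>R a) (h *\<^sub>R a)
                        (- (h *\<^sub>R (mat 1 - (h^2/4) *\<^sub>R a))) (mat 1 - (h^2/2) *\<^sub>R a)"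

definition Cmat :: "real \<Rightarrow> real^'f^'f \<Rightarrow> real^('f+'f)^('f+'f)" where
  "Cmat h a = block_mat (mat 1 - (h^2/2) *\<^sub>R a) (h *\<^sub>R (mat 1 - (h^2/4) *\<^sub>R a))
                        (- (h *\<^sub>R a)) (mat 1 - (h^2/2) *\<^sub>R a)"

definition Bmat :: "real \<Rightarrow> real^'f^'f \<Rightarrow> real^('f+'f)^('f+'f)" where
  "Bmat h b = block_mat (h *\<^sub>R b) ((h^2/2) *\<^sub>R b)
                        (- ((h^2/2) *\<^sub>R b)) (- ((h^3/4) *\<^sub>R b))"

end

theory Submission imports Defs begin

lemma sum_UNIV_Plus: "(\<Sum>k\<in>(UNIV::('a::finite+'b::finite) set). f k) = (\<Sum>k\<in>UNIV. f (Inl k)) + (\<Sum>k\<in>UNIV. f (Inr k))"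
  using sum.Plus[of "UNIV::'a set" "UNIV::'b set" f] by (simp add: o_def)

lemma blk12_mult: "blk12 (block_mat P Q R S ** X) = P ** blk12 X + Q ** blk22 X"
  by (simp add: blk12_def blk22_def block_mat_def matrix_matrix_mult_def vec_eq_iff sum_UNIV_Plus)
lemma blk22_mult: "blk22 (block_mat P Q R S ** X) = R ** blk12 X + S ** blk22 X"
  by (simp add: blk12_def blk22_def block_mat_def matrix_matrix_mult_def vec_eq_iff sum_UNIV_Plus)

lemma block_mult: "block_mat P Q R S ** block_mat P' Q' R' S' =
   block_mat (P ** P' + Q ** R') (P ** Q' + Q ** S') (R ** P' + S ** R') (R ** Q' + S ** S')"
  by (simp add: block_mat_def matrix_matrix_mult_def vec_eq_iff sum_UNIV_Plus split: sum.split)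

lemma block_transpose: "transpose (block_mat P Q R S) = block_mat (transpose P) (transpose R) (transpose Q) (transpose S)"
  by (simp add: block_mat_def transpose_def vec_eq_iff split: sum.split)

lemma blk_block: "blk11 (block_mat P Q R S) = P" "blk12 (block_mat P Q R S) = Q"
  "blk21 (block_mat P Q R S) = R" "blk22 (block_mat P Q R S) = S"
  by (simp_all add: blk11_def blk12_def blk21_def blk22_def block_mat_def vec_eq_iff)

lemma block_eq: "block_mat P Q R S = block_mat P' Q' R' S' \<longleftrightarrow> P = P' \<and> Q = Q' \<and> R = R' \<and> S = S'"
proof
  assume e: "block_mat P Q R S = block_mat P' Q' R' S'"
  have "blk11 (block_mat P Q R S) = blk11 (block_mat P' Q' R' S')"
       "blk12 (block_mat P Q R S) = blk12 (block_mat P' Q' R' S')"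
       "blk21 (block_mat P Q R S) = blk21 (block_mat P' Q' R' S')"
       "blk22 (block_mat P Q R S) = blk22 (block_mat P' Q' R' S')" using e by simp_all
  then show "P = P' \<and> Q = Q' \<and> R = R' \<and> S = S'" by (simp add: blk_block)
qed simp

lemma block_one: "(mat 1 :: real^('n::finite+'n)^('n+'n)) = block_mat (mat 1) 0 0 (mat 1)"
  by (simp add: block_mat_def mat_def vec_eq_iff split: sum.split)

lemma mm_rdiff: "(A - B) ** (C::real^_^_) = A ** C - B ** C"
  by (simp add: matrix_matrix_mult_def vec_eq_iff sum_subtractf left_diff_distrib)
lemma mm_ldiff: "(C::real^_^_) ** (A - B) = C ** A - C ** B"
  by (simp add: matrix_matrix_mult_def vec_eq_iff sum_subtractf right_diff_distrib)
lemma mm_radd: "(A + B) ** (C::real^_^_) = A ** C + B ** C"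
  by (simp add: matrix_matrix_mult_def vec_eq_iff sum.distrib distrib_right)
lemma mm_lminus: "(C::real^_^_) ** (- A) = - (C ** A)"
  by (simp add: matrix_matrix_mult_def vec_eq_iff sum_negf)
lemma mm_rminus: "(- A) ** (C::real^_^_) = - (A ** C)"
  by (simp add: matrix_matrix_mult_def vec_eq_iff sum_negf)
lemma mm_lscale: "(k *\<^sub>R A) ** (C::real^_^_) = k *\<^sub>R (A ** C)"
  by (simp add: scalar_matrix_assoc)
lemma mm_rscale: "(C::real^_^_) ** (k *\<^sub>R A) = k *\<^sub>R (C ** A)"
  by (simp add: matrix_scalar_ac scalar_matrix_assoc)
lemma tr_add: "transpose (A + B) = transpose A + transpose (B::real^_^_)"
  by (simp add: transpose_def vec_eq_iff)
lemma tr_diff: "transpose (A - B) = transpose A - transpose (B::real^_^_)"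
  by (simp add: transpose_def vec_eq_iff)
lemma tr_minus: "transpose (- A) = - transpose (A::real^_^_)"
  by (simp add: transpose_def vec_eq_iff)
lemma tr_zero: "transpose (0::real^_^_) = 0"
  by (simp add: transpose_def vec_eq_iff)

lemmas mmsimps = mm_rdiff mm_ldiff mm_radd matrix_add_ldistrib mm_lminus mm_rminus mm_lscale mm_rscale
  tr_add tr_diff tr_minus tr_zero transpose_scalar matrix_transpose_mul

lemma key:
  fixes A B C :: "real^'m^'m"
  assumes AC: "transpose A ** C = mat 1" and CB: "transpose (transpose C ** B) = transpose C ** B"
  shows "blk22 (mat_pow (block_mat A B 0 C) N) = mat_pow C N \<and>
    transpose (blk22 (mat_pow (block_mat A B 0 C) N)) ** blk12 (mat_pow (block_mat A B 0 C) N)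
     = transpose (blk12 (mat_pow (block_mat A B 0 C) N)) ** blk22 (mat_pow (block_mat A B 0 C) N)"
proof (induction N)
  case 0
  then show ?case proof -
    have "blk12 (mat 1 :: real^('m+'m)^('m+'m)) = 0" "blk22 (mat 1 :: real^('m+'m)^('m+'m)) = mat 1"
      by (simp_all add: block_one blk12_def blk22_def block_mat_def vec_eq_iff)
    then show ?thesis by (simp add: tr_zero)
  qed
next
  case (Suc N)
  define P where "P = mat_pow (block_mat A B 0 C) N"
  define F where "F = mat_pow C N"
  define G where "G = blk12 P"
  have IH: "blk22 P = F" "transpose F ** G = transpose G ** F" using Suc by (auto simp: P_def F_def G_def)
  have CA: "transpose C ** A = mat 1" using arg_cong[OF AC, of transpose] by (simp add: matrix_transpose_mul)
  have e1: "blk22 (mat_pow (block_mat A B 0 C) (Suc N)) = C ** F"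
    using IH by (simp add: P_def[symmetric] blk22_mult)
  have e2: "blk12 (mat_pow (block_mat A B 0 C) (Suc N)) = A ** G + B ** F"
    using IH by (simp add: P_def[symmetric] blk12_mult G_def)
  have "transpose (C ** F) ** (A ** G + B ** F) = transpose F ** G + transpose F ** (transpose C ** B) ** F"
    by (simp add: matrix_transpose_mul matrix_add_ldistrib matrix_mul_assoc)
       (metis CA matrix_mul_assoc matrix_mul_rid)
  also have "\<dots> = transpose G ** F + transpose F ** transpose (transpose C ** B) ** F"
    using IH(2) CB by simp
  also have "\<dots> = transpose (A ** G + B ** F) ** (C ** F)"
  proof -
    have "transpose (A ** G + B ** F) ** (C ** F) = transpose G ** (transpose A ** C) ** F + transpose F ** transpose (transpose C ** B) ** F"
      by (simp add: matrix_transpose_mul mm_radd matrix_mul_assoc tr_add)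
    then show ?thesis using AC by simp
  qed
  finally show ?case using e1 e2 by (simp add: F_def)
qed

lemma AC_id:
  fixes a :: "real^'f^'f"
  assumes "transpose a = a"
  shows "transpose (Amat h a) ** Cmat h a = mat 1"
  unfolding Amat_def Cmat_def block_transpose block_mult block_one block_eq
  using assms
  by (simp add: mmsimps vec_eq_iff algebra_simps power2_eq_square power3_eq_cube) 

lemma CB_sym:
  fixes a b :: "real^'f^'f"
  assumes "transpose a = a" "transpose b = b"
  shows "transpose (transpose (Cmat h a) ** Bmat h b) = transpose (Cmat h a) ** Bmat h b"
  unfolding Bmat_def Cmat_def block_transpose block_mult block_one block_eq
  using assms
  by (simp add: mmsimps vec_eq_iff algebra_simps power2_eq_square power3_eq_cube) 

theorem lemma3p6:
  fixes K :: "real^'s \<Rightarrow> real^'f^'f"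
    and K' :: "real^'s \<Rightarrow> real^'s \<Rightarrow> real^'f^'f"
    and \<epsilon> H :: real and n :: nat
  assumes eps: "\<epsilon> > 0"
    and deriv: "\<And>q. (K has_derivative K' q) (at q)"
    and cont: "\<And>v. continuous_on UNIV (\<lambda>q. K' q v)"
    and sym: "\<And>q. transpose (K q) = K q"
    and posdef: "\<And>q x. x \<noteq> 0 \<Longrightarrow> x \<bullet> (K q *v x) > 0"
    and H: "H > 0" and n: "n \<ge> 1"
  shows "\<forall>q i.
    let h = H / 2^n;
        a = (1/\<epsilon>) *\<^sub>R K q;
        b = (1/\<epsilon>) *\<^sub>R K' q (axis i 1);
        P = mat_pow (block_mat (Amat h a) (Bmat h b) 0 (Cmat h a)) (2^n);
        G2 = blk12 P;
        F3 = blk22 P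
    in transpose F3 ** G2 = transpose G2 ** F3"
proof -
  have blt: "bounded_linear (transpose :: real^'f^'f \<Rightarrow> real^'f^'f)"
    by (rule linear_conv_bounded_linear[THEN iffD1], rule linearI) (simp_all add: tr_add transpose_scalar)
  have Ksym: "transpose (K' q v) = K' q v" for q v
  proof -
    have d1: "((\<lambda>x. transpose (K x)) has_derivative (\<lambda>v. transpose (K' q v))) (at q)"
      using has_derivative_compose[OF deriv[of q] bounded_linear.has_derivative[OF blt has_derivative_ident]]
      by (simp add: o_def)
    have "(\<lambda>x. transpose (K x)) = K" using sym by (simp add: fun_eq_iff)
    then have d2: "(K has_derivative (\<lambda>v. transpose (K' q v))) (at q)" using d1 by simp
    have "(\<lambda>v. transpose (K' q v)) = K' q" by (rule has_derivative_unique[OF d2 deriv[of q]])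
    then show ?thesis by (simp add: fun_eq_iff)
  qed
  show ?thesis
  proof (intro allI)
    fix q i
    define h where "h = H / 2^n"
    define a where "a = (1/\<epsilon>) *\<^sub>R K q"
    define b where "b = (1/\<epsilon>) *\<^sub>R K' q (axis i 1)"
    have ta: "transpose a = a" using sym by (simp add: a_def transpose_scalar)
    have tb: "transpose b = b" using Ksym by (simp add: b_def transpose_scalar)
    have "transpose (blk22 (mat_pow (block_mat (Amat h a) (Bmat h b) 0 (Cmat h a)) (2^n))) ** blk12 (mat_pow (block_mat (Amat h a) (Bmat h b) 0 (Cmat h a)) (2^n))
     = transpose (blk12 (mat_pow (block_mat (Amat h a) (Bmat h b) 0 (Cmat h a)) (2^n))) ** blk22 (mat_pow (block_mat (Amat h a) (Bmat h b) 0 (Cmat h a)) (2^n))"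
      using key[OF AC_id[OF ta] CB_sym[OF ta tb]] by blast
    then show "let h = H / 2^n;
        a = (1/\<epsilon>) *\<^sub>R K q;
        b = (1/\<epsilon>) *\<^sub>R K' q (axis i 1);
        P = mat_pow (block_mat (Amat h a) (Bmat h b) 0 (Cmat h a)) (2^n);
        G2 = blk12 P;
        F3 = blk22 P
    in transpose F3 ** G2 = transpose G2 ** F3"
      unfolding Let_def h_def[symmetric] a_def[symmetric] b_def[symmetric] .
  qed
qed

end
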